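(* Let $\lambda\neq0$. For every positive integer $N$ and every integer $k\ge 0$, $$Bl_{k+N}(\lambda)=(-1)^N\lambda\sum_{i=1}^{N+1}a_{i-1}(N;\lambda)\sum_{l=0}^{k}\binom{k}{l}(-1)^l(N+l-1)_l\,Bl^{(i)}_{k-l}(\lambda).$$
   Context: $(x)_n=x(x-1)\cdots(x-n+1)$, $(x)_0=1$. The Boole numbers $Bl_n(\lambda)$ and higher-order Boole numbers $Bl_n^{(r)}(\lambda)$ ($r\in\mathbb{N}$) are defined by $\frac{1}{(1+t)^\lambda+1}=\sum_{n\ge0}Bl_n(\lambda)\frac{t^n}{n!}$ and $\left(\frac{1}{(1+t)^\lambda+1}\right)^r=\sum_{n\ge0}Bl_n^{(r)}(\lambda)\frac{t^n}{n!}$. The numbers $a_i(N;\lambda)$ are defined recursively by $a_0(0;\lambda)=1/\lambda$ and, for $N\ge0$: $a_0(N+1;\lambda)=(N+\lambda)a_0(N;\lambda)$, $a_{N+1}(N+1;\lambda)=-(N+1)\lambda a_N(N;\lambda)$, $a_k(N+1;\lambda)=-k\lambda a_{k-1}(N;\lambda)+(N+(k+1)\lambda)a_k(N;\lambda)$ for $1\le k\le N$; they are the coefficients for which $\left(\frac{d}{dt}\right)^N F=\frac{(-1)^N\lambda}{(1+t)^N}\sum_{i=1}^{N+1}a_{i-1}(N;\lambda)F^i$ with $F=\frac{1}{(1+t)^\lambda+1}$. *)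

theory Defs
  imports "HOL-Computational_Algebra.Formal_Power_Series"
begin

definition falling :: "'a::comm_ring_1 \<Rightarrow> nat \<Rightarrow> 'a" where
  "falling x n = (\<Prod>j<n. x - of_nat j)"

definition boole_fps :: "'a::field_char_0 \<Rightarrow> 'a fps" where
  "boole_fps lam = inverse (fps_binomial lam + 1)"

definition boole_high :: "nat \<Rightarrow> nat \<Rightarrow> 'a::field_char_0 \<Rightarrow> 'a" where
  "boole_high r n lam = fact n * fps_nth (boole_fps lam ^ r) n"

definition boole :: "nat \<Rightarrow> 'a::field_char_0 \<Rightarrow> 'a" where
  "boole n lam = fact n * fps_nth (boole_fps lam) n"

text \<open>The coefficients a_k(N;lambda); acoef k N lam = a_k(N;lambda), meaningful for k \<le> N
  (set to 0 for k > N).\<close>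
fun acoef :: "nat \<Rightarrow> nat \<Rightarrow> 'a::field_char_0 \<Rightarrow> 'a" where
  "acoef k 0 lam = (if k = 0 then 1 / lam else 0)"
| "acoef k (Suc N) lam =
     (if k = 0 then (of_nat N + lam) * acoef 0 N lam
      else if k = Suc N then - (of_nat (Suc N) * lam) * acoef N N lam
      else if k \<le> N then - (of_nat k * lam) * acoef (k - 1) N lam
                         + (of_nat N + of_nat (k + 1) * lam) * acoef k N lam
      else 0)"

end

theory Submission
  imports Defs
begin

lemma acoef_zero: "N < k \<Longrightarrow> acoef k N lam = 0"
  by (induction N arbitrary: k) auto

lemma acoef_Suc: "acoef k (Suc N) (lam::'a::field_char_0) =
   - (of_nat k * lam) * acoef (k - 1) N lam + (of_nat N + of_nat (k + 1) * lam) * acoef k N lam"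
  by (auto simp: acoef_zero)

lemma key:
  fixes lam :: "'a::field_char_0"
  defines "F \<equiv> boole_fps lam"
  shows "(1 + fps_X) * fps_deriv F = fps_const lam * (F^2 - F)"
proof -
  define B where "B = fps_binomial lam"
  have B0: "fps_nth (B + 1) 0 \<noteq> 0" by (simp add: B_def)
  have F: "F = inverse (B + 1)" by (simp add: F_def B_def boole_fps_def)
  have BF: "(B + 1) * F = 1" using inverse_mult_eq_1'[OF B0] F by simp
  have X0: "fps_nth (1 + fps_X :: 'a fps) 0 \<noteq> 0" by simp
  have dB: "(1 + fps_X) * fps_deriv B = fps_const lam * B"
    unfolding B_def fps_binomial_deriv fps_divide_unit[OF X0]
    using inverse_mult_eq_1'[OF X0] by (simp add: algebra_simps)
  have "fps_deriv F = - fps_deriv B * F^2" using fps_inverse_deriv[OF B0] F by simp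
  then have "(1 + fps_X) * fps_deriv F = - ((1 + fps_X) * fps_deriv B) * F * F"
    by (simp add: power2_eq_square mult.assoc)
  also have "\<dots> = fps_const (- lam) * (B * F) * F" using dB by (simp add: mult.assoc fps_const_neg[symmetric] del: fps_const_neg)
  also have "B * F = 1 - F" using BF by (simp add: algebra_simps)
  also have "fps_const (- lam) * (1 - F) * F = fps_const lam * (F^2 - F)"
    unfolding fps_const_neg[symmetric] by (simp add: power2_eq_square algebra_simps del: fps_const_neg)
  finally show ?thesis .
qed

definition Gs :: "'a::field_char_0 \<Rightarrow> nat \<Rightarrow> 'a fps" where
  "Gs lam N = (\<Sum>i\<le>N. fps_const (acoef i N lam) * boole_fps lam ^ Suc i)"

lemma dG:
  fixes lam :: "'a::field_char_0"
  defines "F \<equiv> boole_fps lam"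
  shows "(1 + fps_X) * fps_deriv (Gs lam N) =
    fps_const lam * (\<Sum>i\<le>N. fps_const (acoef i N lam * of_nat (Suc i)) * (F^(i+2) - F^(i+1)))"
proof -
  have k: "(1 + fps_X) * fps_deriv F = fps_const lam * (F^2 - F)" unfolding F_def by (rule key)
  have "(1 + fps_X) * fps_deriv (Gs lam N) =
     (\<Sum>i\<le>N. (1 + fps_X) * (fps_const (acoef i N lam) * (of_nat (Suc i) * fps_deriv F * F^i)))"
    unfolding Gs_def fps_deriv_sum sum_distrib_left F_def
    by (simp only: fps_deriv_power' fps_deriv_mult_const_left diff_Suc_1)
  also have "\<dots> = (\<Sum>i\<le>N. fps_const lam * (fps_const (acoef i N lam * of_nat (Suc i)) * (F^(i+2) - F^(i+1))))"
  proof (rule sum.cong[OF refl])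
    fix i
    have "(1 + fps_X) * (fps_const (acoef i N lam) * (of_nat (Suc i) * fps_deriv F * F^i))
       = fps_const (acoef i N lam) * of_nat (Suc i) * F^i * ((1 + fps_X) * fps_deriv F)"
      by (simp only: mult_ac)
    also have "\<dots> = fps_const lam * (fps_const (acoef i N lam * of_nat (Suc i)) * (F^(i+2) - F^(i+1)))"
      unfolding k by (simp add: fps_of_nat[symmetric] fps_const_mult[symmetric] algebra_simps power2_eq_square del: of_nat_Suc fps_const_mult)
    finally show "(1 + fps_X) * (fps_const (acoef i N lam) * (of_nat (Suc i) * fps_deriv F * F^i))
       = fps_const lam * (fps_const (acoef i N lam * of_nat (Suc i)) * (F^(i+2) - F^(i+1)))" .
  qed
  also have "\<dots> = fps_const lam * (\<Sum>i\<le>N. fps_const (acoef i N lam * of_nat (Suc i)) * (F^(i+2) - F^(i+1)))"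
    by (simp add: sum_distrib_left)
  finally show ?thesis .
qed

lemma recG:
  fixes lam :: "'a::field_char_0"
  shows "Gs lam (Suc N) = fps_const (of_nat N) * Gs lam N - (1 + fps_X) * fps_deriv (Gs lam N)"
proof -
  define F where "F = boole_fps lam"
  define a where "a i = acoef i N lam" for i
  define T where "T i = fps_const (- (of_nat (Suc i) * lam) * a i) * F^(Suc (Suc i))
     + fps_const ((of_nat N + of_nat (i+1) * lam) * a i) * F^(Suc i)" for i
  have "Gs lam (Suc N) = (\<Sum>i\<le>Suc N. fps_const (- (of_nat i * lam) * acoef (i - 1) N lam) * F^(Suc i))
      + (\<Sum>i\<le>Suc N. fps_const ((of_nat N + of_nat (i + 1) * lam) * a i) * F^(Suc i))"
    unfolding sum.distrib[symmetric] Gs_def F_def a_def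
    by (intro sum.cong refl) (simp only: acoef_Suc fps_const_add[symmetric] distrib_right[of "fps_const _"])
  also have "(\<Sum>i\<le>Suc N. fps_const (- (of_nat i * lam) * acoef (i - 1) N lam) * F^(Suc i))
      = (\<Sum>i\<le>N. fps_const (- (of_nat (Suc i) * lam) * a i) * F^(Suc (Suc i)))"
    by (subst sum.atMost_Suc_shift) (simp add: a_def)
  also have "(\<Sum>i\<le>Suc N. fps_const ((of_nat N + of_nat (i + 1) * lam) * a i) * F^(Suc i))
      = (\<Sum>i\<le>N. fps_const ((of_nat N + of_nat (i + 1) * lam) * a i) * F^(Suc i))"
    by (subst sum.atMost_Suc) (simp add: a_def acoef_zero)
  also have "(\<Sum>i\<le>N. fps_const (- (of_nat (Suc i) * lam) * a i) * F^(Suc (Suc i)))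
     + (\<Sum>i\<le>N. fps_const ((of_nat N + of_nat (i + 1) * lam) * a i) * F^(Suc i)) = (\<Sum>i\<le>N. T i)"
    unfolding T_def sum.distrib ..
  also have "(\<Sum>i\<le>N. T i) = (\<Sum>i\<le>N. fps_const (of_nat N) * (fps_const (a i) * F^Suc i)
       - fps_const lam * (fps_const (a i * of_nat (Suc i)) * (F^(i+2) - F^(i+1))))"
  proof (rule sum.cong[OF refl])
    fix i show "T i = fps_const (of_nat N) * (fps_const (a i) * F^Suc i)
       - fps_const lam * (fps_const (a i * of_nat (Suc i)) * (F^(i+2) - F^(i+1)))"
      unfolding T_def
      by (simp add: fps_const_mult[symmetric] fps_const_add[symmetric] fps_const_neg[symmetric]
           algebra_simps del: of_nat_Suc fps_const_mult fps_const_add fps_const_neg)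
  qed
  also have "\<dots> = fps_const (of_nat N) * Gs lam N - (1 + fps_X) * fps_deriv (Gs lam N)"
    unfolding dG by (simp add: Gs_def F_def a_def sum_subtractf sum_distrib_left)
  finally show ?thesis .
qed

lemma dP: "(1 + fps_X) * fps_deriv ((1 + fps_X :: 'a::field_char_0 fps) ^ N) = of_nat N * (1 + fps_X) ^ N"
proof (cases N)
  case (Suc m)
  have "fps_deriv ((1 + fps_X :: 'a fps) ^ Suc m) = of_nat (Suc m) * fps_deriv (1 + fps_X) * (1 + fps_X) ^ m"
    by (simp only: fps_deriv_power' diff_Suc_1)
  then show ?thesis using Suc by (simp add: mult_ac del: of_nat_Suc)
qed simp

lemma mainD:
  fixes lam :: "'a::field_char_0"
  assumes "lam \<noteq> 0"
  shows "(1 + fps_X) ^ N * (fps_deriv ^^ N) (boole_fps lam) = fps_const ((-1)^N * lam) * Gs lam N"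
proof (induction N)
  case 0
  have "fps_const lam * fps_const (1 / lam) = (1 :: 'a fps)"
    using assms by simp
  then show ?case by (simp add: Gs_def mult.assoc[symmetric])
next
  case (Suc N)
  define P where "P = (1 + fps_X :: 'a fps) ^ N"
  define D where "D = (fps_deriv ^^ N) (boole_fps lam)"
  define c where "c = fps_const ((-1)^N * lam)"
  have IH: "P * D = c * Gs lam N" using Suc.IH by (simp add: P_def D_def c_def)
  have "(1 + fps_X) ^ Suc N * (fps_deriv ^^ Suc N) (boole_fps lam)
      = (1 + fps_X) * (fps_deriv (P * D) - fps_deriv P * D)"
    by (simp add: P_def D_def fps_deriv_mult algebra_simps)
  also have "\<dots> = (1 + fps_X) * fps_deriv (c * Gs lam N) - ((1 + fps_X) * fps_deriv P) * D"
    by (simp only: IH right_diff_distrib mult.assoc)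
  also have "\<dots> = c * ((1 + fps_X) * fps_deriv (Gs lam N)) - of_nat N * (P * D)"
    unfolding P_def dP c_def fps_deriv_mult_const_left by (simp only: mult.assoc mult.left_commute)
  also have "\<dots> = - c * Gs lam (Suc N)"
    unfolding IH recG by (simp add: algebra_simps fps_of_nat[symmetric] del: fps_const_mult)
  also have "- c = fps_const ((-1)^Suc N * lam)" by (simp add: c_def)
  finally show ?case .
qed

lemma nth_deriv:
  fixes f :: "'a::field_char_0 fps"
  shows "fact k * fps_nth ((fps_deriv ^^ N) f) k = fact (k + N) * fps_nth f (k + N)"
proof (induction N arbitrary: k)
  case 0 then show ?case by simp
next
  case (Suc N)
  have "fact k * fps_nth ((fps_deriv ^^ Suc N) f) k = (fact k * of_nat (k + 1)) * fps_nth ((fps_deriv ^^ N) f) (k + 1)"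
    by simp
  also have "fact k * of_nat (k + 1) = (fact (k + 1) :: 'a)" by (simp add: algebra_simps)
  also have "fact (k + 1) * fps_nth ((fps_deriv ^^ N) f) (k + 1) = fact (k + Suc N) * fps_nth f (k + Suc N)"
    using Suc.IH[of "k+1"] by simp
  finally show ?case .
qed

lemma binom_coef:
  fixes N :: nat and X :: "'a::field_char_0"
  assumes "l \<le> k"
  shows "fact k * fps_nth (fps_binomial (- of_nat N)) l * X =
    of_nat (k choose l) * (-1) ^ l * falling (of_nat N + of_nat l - 1) l * (fact (k - l) * X)"
proof -
  have fk: "(fact k :: 'a) = fact l * fact (k - l) * of_nat (k choose l)"
    using binomial_fact_lemma[OF assms] by (metis of_nat_fact of_nat_mult)
  have b: "fps_nth (fps_binomial (- of_nat N)) l = (-1) ^ l * (falling (of_nat N + of_nat l - 1) l / (fact l :: 'a))"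
    unfolding fps_binomial_nth gbinomial_minus unfolding gbinomial_prod_rev falling_def atLeast0LessThan by simp
  show ?thesis unfolding fk b by (simp add: field_simps)
qed

lemma shiftS: "(\<Sum>i=1..N+1. g i) = (\<Sum>i\<le>N. g (Suc i) :: 'a::comm_monoid_add)"
  by (induction N) auto

theorem theorem3:
  fixes lam :: "'a::field_char_0"
  assumes "lam \<noteq> 0" and "N \<ge> 1"
  shows "boole (k + N) lam =
    (-1) ^ N * lam *
      (\<Sum>i=1..N+1. acoef (i - 1) N lam *
         (\<Sum>l=0..k. of_nat (k choose l) * (-1) ^ l *
            falling (of_nat N + of_nat l - 1) l * boole_high i (k - l) lam))"
proof -
  define F where "F = boole_fps lam"
  define P where "P = (1 + fps_X :: 'a fps) ^ N"
  define D where "D = (fps_deriv ^^ N) F"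
  define c0 where "c0 = (-1) ^ N * lam"
  define B' where "B' = fps_binomial (- of_nat N :: 'a)"
  have PD: "P * D = fps_const c0 * Gs lam N"
    using mainD[OF assms(1), of N] by (simp add: P_def D_def c0_def F_def)
  have P0: "fps_nth P 0 \<noteq> 0" by (simp add: P_def)
  have B'P: "B' = inverse P" by (simp add: B'_def P_def fps_binomial_minus_of_nat)
  have "D = B' * (P * D)" unfolding B'P mult.assoc[symmetric] inverse_mult_eq_1[OF P0] by simp
  also have "\<dots> = fps_const c0 * (\<Sum>i\<le>N. fps_const (acoef i N lam) * (B' * F ^ Suc i))"
    unfolding PD Gs_def F_def sum_distrib_left by (simp add: mult_ac)
  finally have D2: "D = fps_const c0 * (\<Sum>i\<le>N. fps_const (acoef i N lam) * (B' * F ^ Suc i))" .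
  have "boole (k + N) lam = fact k * fps_nth D k"
    using nth_deriv[of k N F] by (simp add: boole_def D_def F_def)
  also have "\<dots> = c0 * (\<Sum>i\<le>N. acoef i N lam *
      (\<Sum>l=0..k. fact k * fps_nth B' l * fps_nth (F ^ Suc i) (k - l)))"
    unfolding D2 fps_mult_left_const_nth fps_sum_nth fps_mult_nth[of B'] sum_distrib_left
    by (simp add: mult_ac del: power_Suc)
  also have "\<dots> = c0 * (\<Sum>i\<le>N. acoef i N lam *
      (\<Sum>l=0..k. of_nat (k choose l) * (-1) ^ l *
            falling (of_nat N + of_nat l - 1) l * boole_high (Suc i) (k - l) lam))"
    unfolding boole_high_def F_def B'_def
    by (intro arg_cong[where f="\<lambda>x. c0 * x"] sum.cong refl arg_cong[where f="\<lambda>x. acoef _ N lam * x"])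
       (rule binom_coef, simp)
  also have "\<dots> = (-1) ^ N * lam *
      (\<Sum>i=1..N+1. acoef (i - 1) N lam *
         (\<Sum>l=0..k. of_nat (k choose l) * (-1) ^ l *
            falling (of_nat N + of_nat l - 1) l * boole_high i (k - l) lam))"
    unfolding c0_def shiftS by simp
  finally show ?thesis .
qed

end
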